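(* Let $N<M$ be natural numbers. Suppose $\emptyset\neq A_1\subseteq{}^N2$, $\emptyset\neq A_2\subseteq{}^{[N,M)}2$ and $A\subseteq{}^M2$ satisfy $\|A_1\|_4^N>1$, $\|A_2\|_4^{[N,M)}>1$ and $A=\{f\cup g: f\in A_1,\ g\in A_2\}$. Then \[\|A\|_4^M\geq\min\{\|A_1\|_4^N,\|A_2\|_4^{[N,M)}\}.\]
   Context: $N=\{0,\ldots,N-1\}$, $M=\{0,\ldots,M-1\}$, $[N,M)=\{N,\ldots,M-1\}$. For a finite index set $I$, ${}^I2$ is the set of all functions $I\to\{0,1\}$ and ${}^{\underline I}2$ the set of partial functions $\sigma$ with $\mathrm{dom}(\sigma)\subseteq I$ and values in $\{0,1\}$ (empty function included); for $\sigma\in{}^{\underline I}2$, $[\sigma]=\{f\in{}^I2:\sigma\subseteq f\}$. For $A\subseteq{}^I2$, $\Delta_I(A)=\{\sigma\in{}^{\underline I}2:[\sigma]\cap A=\emptyset\text{ and }[\rho]\cap A\neq\emptyset\text{ for all }\rho\subsetneq\sigma\}$. For $\delta_1,\delta_2\subseteq{}^{\underline I}2$, $\delta_1\preceq\delta_2$ means every $\sigma\in\delta_1$ has some $\rho\in\delta_2$ with $\rho\subseteq\sigma$. For $\delta\subseteq{}^{\underline I}2$, $\mathrm{hn}(\delta)$ is the maximum of $k+1$ over those natural numbers $k<|I|$ such that for every $\delta'\subseteq\delta$ there is $\delta''\subseteq\delta'$ whose elements have pairwise disjoint domains and $|\bigcup_{\sigma\in\delta''}\mathrm{dom}(\sigma)|\geq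 k|\delta'|$; $\mathrm{HN}(\delta)=\max\{\mathrm{hn}(\delta'):\delta'\subseteq{}^{\underline I}2,\ \delta\preceq\delta'\}$; and $\|A\|_4^I=\mathrm{HN}(\Delta_I(A))$ for $A\subseteq{}^I2$. *)

theory Defs
  imports Main
begin

text \<open>Functions and partial functions with values in {0,1} are represented as
  partial maps nat \<rightharpoonup> bool (False = 0, True = 1).\<close>

definition total_fns :: "nat set \<Rightarrow> (nat \<rightharpoonup> bool) set" where
  "total_fns I = {f. dom f = I}"

definition partial_fns :: "nat set \<Rightarrow> (nat \<rightharpoonup> bool) set" where
  "partial_fns I = {\<sigma>. dom \<sigma> \<subseteq> I}"

definition cyl :: "nat set \<Rightarrow> (nat \<rightharpoonup> bool) \<Rightarrow> (nat \<rightharpoonup> bool) set" where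
  "cyl I \<sigma> = {f \<in> total_fns I. \<sigma> \<subseteq>\<^sub>m f}"

definition Delta :: "nat set \<Rightarrow> (nat \<rightharpoonup> bool) set \<Rightarrow> (nat \<rightharpoonup> bool) set" where
  "Delta I A = {\<sigma> \<in> partial_fns I. cyl I \<sigma> \<inter> A = {} \<and>
                 (\<forall>\<rho>. \<rho> \<subseteq>\<^sub>m \<sigma> \<and> \<rho> \<noteq> \<sigma> \<longrightarrow> cyl I \<rho> \<inter> A \<noteq> {})}"

definition preceq :: "(nat \<rightharpoonup> bool) set \<Rightarrow> (nat \<rightharpoonup> bool) set \<Rightarrow> bool" where
  "preceq \<delta>1 \<delta>2 \<longleftrightarrow> (\<forall>\<sigma>\<in>\<delta>1. \<exists>\<rho>\<in>\<delta>2. \<rho> \<subseteq>\<^sub>m \<sigma>)"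

definition hn_good :: "nat set \<Rightarrow> (nat \<rightharpoonup> bool) set \<Rightarrow> nat \<Rightarrow> bool" where
  "hn_good I \<delta> k \<longleftrightarrow> k < card I \<and>
     (\<forall>\<delta>'. \<delta>' \<subseteq> \<delta> \<longrightarrow> (\<exists>\<delta>''. \<delta>'' \<subseteq> \<delta>' \<and>
        pairwise (\<lambda>\<sigma> \<tau>. dom \<sigma> \<inter> dom \<tau> = {}) \<delta>'' \<and>
        card (\<Union>\<sigma>\<in>\<delta>''. dom \<sigma>) \<ge> k * card \<delta>'))"

text \<open>Maximum of k+1 over good k; convention 0 when there is no good k
  (only possible when I is empty).\<close>
definition hn :: "nat set \<Rightarrow> (nat \<rightharpoonup> bool) set \<Rightarrow> nat" where
  "hn I \<delta> = (let S = {k + 1 | k. hn_good I \<delta> k} in if S = {} then 0 else Max S)"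

definition HN :: "nat set \<Rightarrow> (nat \<rightharpoonup> bool) set \<Rightarrow> nat" where
  "HN I \<delta> = Max {hn I \<delta>' | \<delta>'. \<delta>' \<subseteq> partial_fns I \<and> preceq \<delta> \<delta>'}"

definition norm4 :: "nat set \<Rightarrow> (nat \<rightharpoonup> bool) set \<Rightarrow> nat" where
  "norm4 I A = HN I (Delta I A)"

end

theory Submission
  imports Defs
begin

lemma finite_partial_fns: "finite I \<Longrightarrow> finite (partial_fns I)"
proof -
  assume fI: "finite I"
  have "partial_fns I \<subseteq> (\<Union>J\<in>Pow I. {m. dom m = J \<and> ran m \<subseteq> (UNIV::bool set)})"
    unfolding partial_fns_def by auto
  moreover have "finite (\<Union>J\<in>Pow I. {m. dom m = J \<and> ran m \<subseteq> (UNIV::bool set)})"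
  proof (rule finite_UN_I)
    show "finite (Pow I)" using fI by simp
  next
    fix J assume "J \<in> Pow I"
    then have "finite J" using fI by (auto dest: finite_subset)
    then show "finite {m. dom m = J \<and> ran m \<subseteq> (UNIV::bool set)}"
      by (rule finite_set_of_finite_maps) simp
  qed
  ultimately show ?thesis by (rule finite_subset)
qed

lemma partial_fns_mono: "I \<subseteq> J \<Longrightarrow> partial_fns I \<subseteq> partial_fns J"
  unfolding partial_fns_def by auto

lemma map_le_neq_dom: "\<rho> \<subseteq>\<^sub>m \<sigma> \<Longrightarrow> \<rho> \<noteq> \<sigma> \<Longrightarrow> dom \<rho> \<subset> dom \<sigma>"
proof -
  assume a: "\<rho> \<subseteq>\<^sub>m \<sigma>" "\<rho> \<noteq> \<sigma>"
  have "dom \<rho> \<subseteq> dom \<sigma>" using a(1) by (rule map_le_implies_dom_le)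
  moreover have "dom \<sigma> \<noteq> dom \<rho>"
  proof
    assume e: "dom \<sigma> = dom \<rho>"
    have "\<rho> = \<sigma>"
    proof
      fix x show "\<rho> x = \<sigma> x"
      proof (cases "x \<in> dom \<rho>")
        case True
        then show ?thesis using a(1) unfolding map_le_def by blast
      next
        case False
        then have "x \<notin> dom \<sigma>" using e by simp
        then show ?thesis using False by (simp add: domIff)
      qed
    qed
    then show False using a(2) by simp
  qed
  ultimately show ?thesis by blast
qed

lemma exists_Delta:
  assumes "finite I"
  shows "\<sigma> \<in> partial_fns I \<Longrightarrow> cyl I \<sigma> \<inter> A = {} \<Longrightarrow> \<exists>\<rho>\<in>Delta I A. \<rho> \<subseteq>\<^sub>m \<sigma>"
proof (induct "card (dom \<sigma>)" arbitrary: \<sigma> rule: less_induct)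
  case (less \<sigma>)
  show ?case
  proof (cases "\<sigma> \<in> Delta I A")
    case True then show ?thesis by (auto intro: map_le_refl)
  next
    case False
    then obtain \<rho> where r: "\<rho> \<subseteq>\<^sub>m \<sigma>" "\<rho> \<noteq> \<sigma>" "cyl I \<rho> \<inter> A = {}"
      using less.prems unfolding Delta_def by auto
    have d: "dom \<rho> \<subset> dom \<sigma>" using r map_le_neq_dom by blast
    have fs: "finite (dom \<sigma>)" using less.prems(1) assms unfolding partial_fns_def
      by (auto dest: finite_subset)
    have c: "card (dom \<rho>) < card (dom \<sigma>)" by (rule psubset_card_mono[OF fs d])
    have p: "\<rho> \<in> partial_fns I" using d less.prems(1) unfolding partial_fns_def by auto
    obtain \<tau> where "\<tau> \<in> Delta I A" "\<tau> \<subseteq>\<^sub>m \<rho>" using less.hyps[OF c p r(3)] by blast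
    then show ?thesis using r(1) by (meson map_le_trans)
  qed
qed

lemma HN_attained:
  assumes "finite I" "\<delta> \<subseteq> partial_fns I"
  shows "\<exists>\<delta>'. \<delta>' \<subseteq> partial_fns I \<and> preceq \<delta> \<delta>' \<and> HN I \<delta> = hn I \<delta>'"
proof -
  let ?S = "{hn I \<delta>' | \<delta>'. \<delta>' \<subseteq> partial_fns I \<and> preceq \<delta> \<delta>'}"
  have "?S = (\<lambda>d. hn I d) ` {\<delta>'. \<delta>' \<subseteq> partial_fns I \<and> preceq \<delta> \<delta>'}" by auto
  moreover have "finite {\<delta>'. \<delta>' \<subseteq> partial_fns I \<and> preceq \<delta> \<delta>'}"
    using finite_partial_fns[OF assms(1)] by (auto intro: finite_subset[of _ "Pow (partial_fns I)"])
  ultimately have f: "finite ?S" by simp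
  have "preceq \<delta> \<delta>" unfolding preceq_def by (auto intro: map_le_refl)
  then have ne: "?S \<noteq> {}" using assms(2) by blast
  have "HN I \<delta> = Max ?S" unfolding HN_def by (rule refl)
  then have "HN I \<delta> \<in> ?S" using Max_in[OF f ne] by simp
  then obtain \<delta>' where "\<delta>' \<subseteq> partial_fns I \<and> preceq \<delta> \<delta>'" "HN I \<delta> = hn I \<delta>'"
    by (auto simp only: mem_Collect_eq)
  then show ?thesis by blast
qed

lemma HN_ge:
  assumes "finite I" "\<delta>' \<subseteq> partial_fns I" "preceq \<delta> \<delta>'"
  shows "hn I \<delta>' \<le> HN I \<delta>"
proof -
  let ?S = "{hn I \<delta>' | \<delta>'. \<delta>' \<subseteq> partial_fns I \<and> preceq \<delta> \<delta>'}"
  have "?S = (\<lambda>d. hn I d) ` {\<delta>'. \<delta>' \<subseteq> partial_fns I \<and> preceq \<delta> \<delta>'}" by auto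
  moreover have "finite {\<delta>'. \<delta>' \<subseteq> partial_fns I \<and> preceq \<delta> \<delta>'}"
    using finite_partial_fns[OF assms(1)] by (auto intro: finite_subset[of _ "Pow (partial_fns I)"])
  ultimately have f: "finite ?S" by simp
  show ?thesis unfolding HN_def using assms(2,3) by (intro Max_ge[OF f]) blast
qed

lemma hn_good_of:
  assumes "hn I \<delta> > 1"
  shows "hn_good I \<delta> (hn I \<delta> - 1)"
proof -
  let ?S = "{k + 1 | k. hn_good I \<delta> k}"
  have ne: "?S \<noteq> {}"
  proof
    assume e: "?S = {}"
    have "hn I \<delta> = 0" unfolding hn_def Let_def e by simp
    then show False using assms by simp
  qed
  have "?S \<subseteq> {..card I}" unfolding hn_good_def by auto
  then have f: "finite ?S" by (rule finite_subset) simp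
  have "hn I \<delta> = Max ?S" unfolding hn_def Let_def by (rule if_not_P[OF ne])
  then have "hn I \<delta> \<in> ?S" using Max_in[OF f ne] by simp
  then show ?thesis by auto
qed

lemma hn_ge:
  assumes "hn_good I \<delta> k"
  shows "k + 1 \<le> hn I \<delta>"
proof -
  let ?S = "{k + 1 | k. hn_good I \<delta> k}"
  have "?S \<subseteq> {..card I}" unfolding hn_good_def by auto
  then have f: "finite ?S" by (rule finite_subset) simp
  have ne: "?S \<noteq> {}" using assms by blast
  have "k + 1 \<in> ?S" using assms by blast
  then show ?thesis unfolding hn_def Let_def using ne Max_ge[OF f] by simp
qed

lemma hn_good_mono:
  assumes "hn_good I \<delta> k" "j \<le> k"
  shows "hn_good I \<delta> j"
  unfolding hn_good_def
proof (intro conjI allI impI)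
  show "j < card I" using assms unfolding hn_good_def by simp
next
  fix \<delta>' assume "\<delta>' \<subseteq> \<delta>"
  then obtain \<delta>'' where "\<delta>'' \<subseteq> \<delta>'" "pairwise (\<lambda>\<sigma> \<tau>. dom \<sigma> \<inter> dom \<tau> = {}) \<delta>''"
      "card (\<Union>\<sigma>\<in>\<delta>''. dom \<sigma>) \<ge> k * card \<delta>'" using assms(1) unfolding hn_good_def by blast
  moreover have "j * card \<delta>' \<le> k * card \<delta>'" using assms(2) by simp
  ultimately show "\<exists>\<delta>''\<subseteq>\<delta>'. pairwise (\<lambda>\<sigma> \<tau>. dom \<sigma> \<inter> dom \<tau> = {}) \<delta>'' \<and>
        j * card \<delta>' \<le> card (\<Union>\<sigma>\<in>\<delta>''. dom \<sigma>)" by (meson order_trans)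
qed

lemma hn_good_union:
  assumes g1: "hn_good I1 d1 k" and g2: "hn_good I2 d2 k"
    and dis: "I1 \<inter> I2 = {}" and s1: "d1 \<subseteq> partial_fns I1" and s2: "d2 \<subseteq> partial_fns I2"
    and sub: "I1 \<union> I2 \<subseteq> I" and fI: "finite I"
  shows "hn_good I (d1 \<union> d2) k"
  unfolding hn_good_def
proof (intro conjI allI impI)
  have "card I1 \<le> card I" using sub fI by (meson card_mono le_sup_iff)
  then show "k < card I" using g1 unfolding hn_good_def by simp
next
  fix \<delta>' assume d': "\<delta>' \<subseteq> d1 \<union> d2"
  have fp: "finite (partial_fns I)" using fI by (rule finite_partial_fns)
  have "d1 \<union> d2 \<subseteq> partial_fns I" using s1 s2 sub unfolding partial_fns_def by blast
  then have fd: "finite \<delta>'" using d' fp by (meson finite_subset)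
  define D1 where "D1 = \<delta>' \<inter> d1"
  define D2 where "D2 = \<delta>' - d1"
  have D2s: "D2 \<subseteq> d2" using d' unfolding D2_def by auto
  obtain E1 where E1: "E1 \<subseteq> D1" "pairwise (\<lambda>\<sigma> \<tau>. dom \<sigma> \<inter> dom \<tau> = {}) E1"
      "card (\<Union>\<sigma>\<in>E1. dom \<sigma>) \<ge> k * card D1"
    using g1 unfolding hn_good_def D1_def by (meson inf_le2)
  obtain E2 where E2: "E2 \<subseteq> D2" "pairwise (\<lambda>\<sigma> \<tau>. dom \<sigma> \<inter> dom \<tau> = {}) E2"
      "card (\<Union>\<sigma>\<in>E2. dom \<sigma>) \<ge> k * card D2"
    using g2 D2s unfolding hn_good_def by blast
  have U1: "(\<Union>\<sigma>\<in>E1. dom \<sigma>) \<subseteq> I1" using E1(1) s1 unfolding D1_def partial_fns_def by blast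
  have U2: "(\<Union>\<sigma>\<in>E2. dom \<sigma>) \<subseteq> I2" using E2(1) D2s s2 unfolding partial_fns_def by blast
  have fU1: "finite (\<Union>\<sigma>\<in>E1. dom \<sigma>)" using U1 sub fI by (meson finite_subset le_sup_iff)
  have fU2: "finite (\<Union>\<sigma>\<in>E2. dom \<sigma>)" using U2 sub fI by (meson finite_subset le_sup_iff)
  have "(\<Union>\<sigma>\<in>E1 \<union> E2. dom \<sigma>) = (\<Union>\<sigma>\<in>E1. dom \<sigma>) \<union> (\<Union>\<sigma>\<in>E2. dom \<sigma>)" by auto
  then have "card (\<Union>\<sigma>\<in>E1 \<union> E2. dom \<sigma>) = card (\<Union>\<sigma>\<in>E1. dom \<sigma>) + card (\<Union>\<sigma>\<in>E2. dom \<sigma>)"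
    using card_Un_disjoint[OF fU1 fU2] U1 U2 dis by auto
  moreover have "card \<delta>' = card D1 + card D2"
  proof -
    have "\<delta>' = D1 \<union> D2" "D1 \<inter> D2 = {}" unfolding D1_def D2_def by auto
    moreover have "finite D1" "finite D2" using fd unfolding D1_def D2_def by auto
    ultimately show ?thesis by (metis card_Un_disjoint)
  qed
  ultimately have c: "k * card \<delta>' \<le> card (\<Union>\<sigma>\<in>E1 \<union> E2. dom \<sigma>)"
    using E1(3) E2(3) by (simp add: add_mult_distrib2)
  have pw: "pairwise (\<lambda>\<sigma> \<tau>. dom \<sigma> \<inter> dom \<tau> = {}) (E1 \<union> E2)"
    unfolding pairwise_def
  proof (intro ballI impI)
    fix \<sigma> \<tau> assume a: "\<sigma> \<in> E1 \<union> E2" "\<tau> \<in> E1 \<union> E2" "\<sigma> \<noteq> \<tau>"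
    show "dom \<sigma> \<inter> dom \<tau> = {}"
    proof (cases "\<sigma> \<in> E1")
      case True
      show ?thesis
      proof (cases "\<tau> \<in> E1")
        case True then show ?thesis using \<open>\<sigma> \<in> E1\<close> a(3) E1(2) unfolding pairwise_def by blast
      next
        case False then have "\<tau> \<in> E2" using a by blast
        then show ?thesis using \<open>\<sigma> \<in> E1\<close> U1 U2 dis by blast
      qed
    next
      case False then have s: "\<sigma> \<in> E2" using a by blast
      show ?thesis
      proof (cases "\<tau> \<in> E1")
        case True then show ?thesis using s U1 U2 dis by blast
      next
        case False then have "\<tau> \<in> E2" using a by blast
        then show ?thesis using s a(3) E2(2) unfolding pairwise_def by blast
      qed
    qed
  qed
  have "E1 \<union> E2 \<subseteq> \<delta>'" using E1(1) E2(1) unfolding D1_def D2_def by auto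
  then show "\<exists>\<delta>''\<subseteq>\<delta>'. pairwise (\<lambda>\<sigma> \<tau>. dom \<sigma> \<inter> dom \<tau> = {}) \<delta>'' \<and>
        k * card \<delta>' \<le> card (\<Union>\<sigma>\<in>\<delta>''. dom \<sigma>)" using pw c by blast
qed

theorem proposition6p28:
  fixes N M :: nat and A1 A2 A :: "(nat \<rightharpoonup> bool) set"
  assumes "N < M"
    and "A1 \<noteq> {}" and "A1 \<subseteq> total_fns {..<N}"
    and "A2 \<noteq> {}" and "A2 \<subseteq> total_fns {N..<M}"
    and "A \<subseteq> total_fns {..<M}"
    and "norm4 {..<N} A1 > 1"
    and "norm4 {N..<M} A2 > 1"
    and "A = {f ++ g | f g. f \<in> A1 \<and> g \<in> A2}"
  shows "norm4 {..<M} A \<ge> min (norm4 {..<N} A1) (norm4 {N..<M} A2)"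
proof -
  have D1s: "Delta {..<N} A1 \<subseteq> partial_fns {..<N}" unfolding Delta_def by auto
  have D2s: "Delta {N..<M} A2 \<subseteq> partial_fns {N..<M}" unfolding Delta_def by auto
  obtain d1 where d1: "d1 \<subseteq> partial_fns {..<N}" "preceq (Delta {..<N} A1) d1"
      "norm4 {..<N} A1 = hn {..<N} d1"
    using HN_attained[OF finite_lessThan D1s] unfolding norm4_def by blast
  obtain d2 where d2: "d2 \<subseteq> partial_fns {N..<M}" "preceq (Delta {N..<M} A2) d2"
      "norm4 {N..<M} A2 = hn {N..<M} d2"
    using HN_attained[OF finite_atLeastLessThan D2s] unfolding norm4_def by blast
  define k where "k = min (norm4 {..<N} A1) (norm4 {N..<M} A2) - 1"
  have h1: "hn_good {..<N} d1 (hn {..<N} d1 - 1)"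
    by (rule hn_good_of) (use assms(7) d1(3) in simp)
  have h2: "hn_good {N..<M} d2 (hn {N..<M} d2 - 1)"
    by (rule hn_good_of) (use assms(8) d2(3) in simp)
  have g1: "hn_good {..<N} d1 k"
    by (rule hn_good_mono[OF h1]) (simp add: k_def d1(3))
  have g2: "hn_good {N..<M} d2 k"
    by (rule hn_good_mono[OF h2]) (simp add: k_def d2(3))
  have dis: "{..<N} \<inter> {N..<M} = {}" by auto
  have ss1: "{..<N} \<subseteq> {..<M}" using assms(1) by auto
  have ss2: "{N..<M} \<subseteq> {..<M}" by auto
  have ss: "{..<N} \<union> {N..<M} \<subseteq> {..<M}" using ss1 ss2 by (rule Un_least)
  have g: "hn_good {..<M} (d1 \<union> d2) k"
    using hn_good_union[OF g1 g2 dis d1(1) d2(1) ss finite_lessThan] .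
  have sub: "d1 \<union> d2 \<subseteq> partial_fns {..<M}"
    using d1(1) d2(1) partial_fns_mono[OF ss1] partial_fns_mono[OF ss2] by blast
  have pre: "preceq (Delta {..<M} A) (d1 \<union> d2)"
    unfolding preceq_def
  proof
    fix \<sigma> assume s: "\<sigma> \<in> Delta {..<M} A"
    have s': "\<sigma> \<in> partial_fns {..<M} \<and> cyl {..<M} \<sigma> \<inter> A = {}"
      using s unfolding Delta_def by blast
    then have sp: "dom \<sigma> \<subseteq> {..<M}" and sc: "cyl {..<M} \<sigma> \<inter> A = {}"
      unfolding partial_fns_def by simp_all
    define \<sigma>1 where "\<sigma>1 = \<sigma> |` {..<N}"
    define \<sigma>2 where "\<sigma>2 = \<sigma> |` {N..<M}"
    have l1: "\<sigma>1 \<subseteq>\<^sub>m \<sigma>" unfolding \<sigma>1_def map_le_def by auto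
    have l2: "\<sigma>2 \<subseteq>\<^sub>m \<sigma>" unfolding \<sigma>2_def map_le_def by auto
    have p1: "\<sigma>1 \<in> partial_fns {..<N}" unfolding \<sigma>1_def partial_fns_def by auto
    have p2: "\<sigma>2 \<in> partial_fns {N..<M}" unfolding \<sigma>2_def partial_fns_def by auto
    have "cyl {..<N} \<sigma>1 \<inter> A1 = {} \<or> cyl {N..<M} \<sigma>2 \<inter> A2 = {}"
    proof (rule ccontr)
      assume "\<not> ?thesis"
      then have ne1: "cyl {..<N} \<sigma>1 \<inter> A1 \<noteq> {}" and ne2: "cyl {N..<M} \<sigma>2 \<inter> A2 \<noteq> {}"
        by simp_all
      obtain f where "f \<in> cyl {..<N} \<sigma>1 \<inter> A1" using ne1 by blast
      then have f: "f \<in> A1" "\<sigma>1 \<subseteq>\<^sub>m f" by (simp_all add: cyl_def)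
      obtain g where "g \<in> cyl {N..<M} \<sigma>2 \<inter> A2" using ne2 by blast
      then have g: "g \<in> A2" "\<sigma>2 \<subseteq>\<^sub>m g" by (simp_all add: cyl_def)
      have df: "dom f = {..<N}" using f assms(3) unfolding total_fns_def by auto
      have dg: "dom g = {N..<M}" using g assms(5) unfolding total_fns_def by auto
      have inA: "f ++ g \<in> A" using f g assms(9) by blast
      have "{..<N} \<union> {N..<M} = {..<M}" using assms(1) by auto
      then have tot: "f ++ g \<in> total_fns {..<M}" using df dg unfolding total_fns_def by (simp add: Un_commute)
      have "\<sigma> \<subseteq>\<^sub>m f ++ g" unfolding map_le_def
      proof
        fix x assume x: "x \<in> dom \<sigma>"
        then have xM: "x < M" using sp by auto
        show "\<sigma> x = (f ++ g) x"
        proof (cases "x < N")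
          case True
          have e1: "\<sigma>1 x = \<sigma> x" unfolding \<sigma>1_def using True by simp
          then have "x \<in> dom \<sigma>1" using x by (simp add: domIff)
          then have "\<sigma>1 x = f x" using f(2) unfolding map_le_def by blast
          then have sf: "\<sigma> x = f x" using e1 by simp
          have "x \<notin> dom g" using dg True by simp
          then have "g x = None" by (simp add: domIff)
          then show ?thesis using sf by (simp add: map_add_def)
        next
          case False
          have xi: "x \<in> {N..<M}" using False xM by simp
          have e2: "\<sigma>2 x = \<sigma> x" unfolding \<sigma>2_def using xi by simp
          then have "x \<in> dom \<sigma>2" using x by (simp add: domIff)
          then have "\<sigma>2 x = g x" using g(2) unfolding map_le_def by blast
          then have sg: "\<sigma> x = g x" using e2 by simp
          then obtain v where "g x = Some v" using x by (auto simp: domIff)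
          then show ?thesis using sg by simp
        qed
      qed
      then have "f ++ g \<in> cyl {..<M} \<sigma>" unfolding cyl_def using tot by simp
      then show False using inA sc by blast
    qed
    then show "\<exists>\<rho>\<in>d1 \<union> d2. \<rho> \<subseteq>\<^sub>m \<sigma>"
    proof
      assume "cyl {..<N} \<sigma>1 \<inter> A1 = {}"
      then obtain \<rho> where "\<rho> \<in> Delta {..<N} A1" "\<rho> \<subseteq>\<^sub>m \<sigma>1" using exists_Delta[OF _ p1] by blast
      then obtain \<tau> where "\<tau> \<in> d1" "\<tau> \<subseteq>\<^sub>m \<rho>" using d1(2) unfolding preceq_def by blast
      then show ?thesis using \<open>\<rho> \<subseteq>\<^sub>m \<sigma>1\<close> l1 by (meson UnI1 map_le_trans)
    next
      assume "cyl {N..<M} \<sigma>2 \<inter> A2 = {}"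
      then obtain \<rho> where "\<rho> \<in> Delta {N..<M} A2" "\<rho> \<subseteq>\<^sub>m \<sigma>2" using exists_Delta[OF _ p2] by blast
      then obtain \<tau> where "\<tau> \<in> d2" "\<tau> \<subseteq>\<^sub>m \<rho>" using d2(2) unfolding preceq_def by blast
      then show ?thesis using \<open>\<rho> \<subseteq>\<^sub>m \<sigma>2\<close> l2 by (meson UnI2 map_le_trans)
    qed
  qed
  have "k + 1 \<le> hn {..<M} (d1 \<union> d2)" by (rule hn_ge[OF g])
  also have "\<dots> \<le> norm4 {..<M} A" unfolding norm4_def by (rule HN_ge[OF finite_lessThan sub pre])
  finally have "k + 1 \<le> norm4 {..<M} A" .
  moreover have "k + 1 = min (norm4 {..<N} A1) (norm4 {N..<M} A2)"
    unfolding k_def using assms(7,8) by (simp add: min_def)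
  ultimately show ?thesis by simp
qed

end
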